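(* Let $\lambda_0,\lambda_1,\lambda_\infty$ be integers with $0<\lambda_x<p^N$ for $x\in\{0,1,\infty\}$ and $\lambda_0+\lambda_1+\lambda_\infty$ odd and $<2p^N$. Let $\phi:\mathbb P\to\mathbb P$ be a finite, separable, tamely ramified morphism that has ramification index $\lambda_x$ at $[x]$ for $x\in\{0,1,\infty\}$ and is étale elsewhere. Then $\phi([0]),\phi([1]),\phi([\infty])$ are pairwise distinct.
   Context: $p$ is a prime, $N\ge1$, $k$ an algebraically closed field of characteristic $p$, $\mathbb P=\mathbb P^1_k$, and $[0],[1],[\infty]\in\mathbb P(k)$ the points with coordinates $0,1,\infty$. *)

theory Defs
  imports "HOL-Computational_Algebra.Polynomial"
begin

text \<open>Points of the projective line P^1(k): \<open>Some a\<close> is the affine point a, \<open>None\<close> is \<infinity>.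
A finite morphism P^1 \<rightarrow> P^1 over k is given by a non-constant rational function P/Q,
represented by a pair of coprime polynomials (P, Q) not both constant.\<close>

type_synonym 'k ppt = "'k option"

definition is_morphism :: "'k::field poly \<times> 'k poly \<Rightarrow> bool" where
  "is_morphism f \<longleftrightarrow> coprime (fst f) (snd f) \<and> snd f \<noteq> 0
     \<and> max (degree (fst f)) (degree (snd f)) > 0"

definition mdeg :: "'k::field poly \<times> 'k poly \<Rightarrow> nat" where
  "mdeg f = max (degree (fst f)) (degree (snd f))"

text \<open>t^d P(1/t), the coordinate change t \<mapsto> 1/t (with d = degree of the morphism).\<close>
definition rev_deg :: "nat \<Rightarrow> 'k::field poly \<Rightarrow> 'k poly" where
  "rev_deg d P = (\<Sum>i\<le>d. monom (coeff P (d - i)) i)"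

definition at_inf_chart :: "'k::field poly \<times> 'k poly \<Rightarrow> 'k poly \<times> 'k poly" where
  "at_inf_chart f = (rev_deg (mdeg f) (fst f), rev_deg (mdeg f) (snd f))"

definition aff_val :: "'k::field poly \<times> 'k poly \<Rightarrow> 'k \<Rightarrow> 'k ppt" where
  "aff_val f a = (if poly (snd f) a = 0 then None else Some (poly (fst f) a / poly (snd f) a))"

definition mval :: "'k::field poly \<times> 'k poly \<Rightarrow> 'k ppt \<Rightarrow> 'k ppt" where
  "mval f x = (case x of Some a \<Rightarrow> aff_val f a | None \<Rightarrow> aff_val (at_inf_chart f) 0)"

definition aff_ram :: "'k::field poly \<times> 'k poly \<Rightarrow> 'k \<Rightarrow> nat" where
  "aff_ram f a = (case aff_val f a of
       None \<Rightarrow> order a (snd f)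
     | Some b \<Rightarrow> order a (fst f - smult b (snd f)))"

definition ram_index :: "'k::field poly \<times> 'k poly \<Rightarrow> 'k ppt \<Rightarrow> nat" where
  "ram_index f x = (case x of Some a \<Rightarrow> aff_ram f a | None \<Rightarrow> aff_ram (at_inf_chart f) 0)"

text \<open>Separable: the extension k(t)/k(f) is separable, i.e. df/dt \<noteq> 0.\<close>
definition separable_morphism :: "'k::field poly \<times> 'k poly \<Rightarrow> bool" where
  "separable_morphism f \<longleftrightarrow> pderiv (fst f) * snd f - fst f * pderiv (snd f) \<noteq> 0"

definition tamely_ramified :: "'k::field poly \<times> 'k poly \<Rightarrow> bool" where
  "tamely_ramified f \<longleftrightarrow> (\<forall>x. \<not> CHAR('k) dvd ram_index f x)"

end

theory Submission
  imports Defs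
begin


lemma coeff_mult_le:
  fixes p q :: "'a::comm_semiring_1 poly"
  assumes "degree p \<le> i" "degree q \<le> j"
  shows "coeff (p * q) (i + j) = coeff p i * coeff q j"
proof -
  have "coeff (p * q) (i + j) = (\<Sum>k\<le>i+j. coeff p k * coeff q (i + j - k))"
    by (rule coeff_mult)
  also have "\<dots> = (\<Sum>k\<le>i+j. if k = i then coeff p i * coeff q j else 0)"
  proof (rule sum.cong)
    fix k assume "k \<in> {..i+j}"
    show "coeff p k * coeff q (i + j - k) = (if k = i then coeff p i * coeff q j else 0)"
    proof (cases "k = i")
      case False
      then have "i < k \<or> j < i + j - k" by auto
      then show ?thesis using assms False by (auto simp: coeff_eq_0)
    qed simp
  qed simp
  also have "\<dots> = coeff p i * coeff q j" by simp
  finally show ?thesis .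
qed

lemma degree_pderiv_le: "degree (pderiv p) \<le> degree p - 1"
  by (rule degree_le) (auto simp: coeff_pderiv coeff_eq_0)

lemma coeff_pderiv_top: "coeff (pderiv p) (degree p - 1) = of_nat (degree p) * lead_coeff p"
proof (cases "degree p")
  case 0
  then show ?thesis by (simp add: coeff_pderiv coeff_eq_0)
next
  case (Suc n)
  then show ?thesis by (simp add: coeff_pderiv)
qed

lemma degree_wronsk:
  fixes A B :: "'a::field poly"
  assumes "A \<noteq> 0" "B \<noteq> 0" "(of_nat (degree A) :: 'a) \<noteq> of_nat (degree B)"
  shows "degree (pderiv A * B - A * pderiv B) = degree A + degree B - 1"
proof -
  define m n where "m = degree A" and "n = degree B"
  have mn: "m \<noteq> n" using assms(3) m_def n_def by auto
  define k where "k = m + n - 1"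
  have pA0: "pderiv A = 0" if "m = 0" using that m_def by (metis degree_eq_zeroE pderiv.simps pderiv_0 pCons_0_0)
  have pB0: "pderiv B = 0" if "n = 0" using that n_def by (metis degree_eq_zeroE pderiv.simps pderiv_0 pCons_0_0)
  have c1: "coeff (pderiv A * B) k = of_nat m * lead_coeff A * lead_coeff B"
  proof (cases "m = 0")
    case True
    then have "pderiv A = 0" by (rule pA0)
    then show ?thesis using True by simp
  next
    case False
    then have "k = (m - 1) + n" unfolding k_def by simp
    then have "coeff (pderiv A * B) k = coeff (pderiv A) (m - 1) * coeff B n"
      using coeff_mult_le[of "pderiv A" "m - 1" B n] degree_pderiv_le[of A] m_def n_def by simp
    then show ?thesis using coeff_pderiv_top[of A] m_def n_def by simp
  qed
  have c2: "coeff (A * pderiv B) k = of_nat n * lead_coeff A * lead_coeff B"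
  proof (cases "n = 0")
    case True
    then have "pderiv B = 0" by (rule pB0)
    then show ?thesis using True by simp
  next
    case False
    then have "k = m + (n - 1)" unfolding k_def using mn by simp
    then have "coeff (A * pderiv B) k = coeff A m * coeff (pderiv B) (n - 1)"
      using coeff_mult_le[of A m "pderiv B" "n - 1"] degree_pderiv_le[of B] m_def n_def by simp
    then show ?thesis using coeff_pderiv_top[of B] m_def n_def by (simp add: mult_ac)
  qed
  have "coeff (pderiv A * B - A * pderiv B) k = (of_nat m - of_nat n) * lead_coeff A * lead_coeff B"
    using c1 c2 by (simp add: algebra_simps)
  moreover have "(of_nat m - of_nat n :: 'a) \<noteq> 0" using assms(3) m_def n_def by simp
  ultimately have "coeff (pderiv A * B - A * pderiv B) k \<noteq> 0" using assms(1,2) by simp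
  then have "k \<le> degree (pderiv A * B - A * pderiv B)" by (rule le_degree)
  moreover have "degree (pderiv A * B) \<le> k"
    using degree_mult_le[of "pderiv A" B] degree_pderiv_le[of A] m_def n_def k_def pA0 by (cases "m = 0") auto
  moreover have "degree (A * pderiv B) \<le> k"
    using degree_mult_le[of A "pderiv B"] degree_pderiv_le[of B] m_def n_def k_def mn pB0 by (cases "n = 0") auto
  ultimately show ?thesis using degree_diff_le[of "pderiv A * B" k "A * pderiv B"] k_def m_def n_def by linarith
qed

lemma order_lin_pow_mult:
  fixes V :: "'a::idom poly"
  assumes "poly V a \<noteq> 0"
  shows "order a ([:-a,1:]^n * V) = n"
proof -
  have "V \<noteq> 0" using assms by auto
  then have "[:-a,1:]^n * V \<noteq> 0" by simp
  then show ?thesis by (simp add: order_mult order_power_n_n order_0I[OF assms])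
qed

lemma order_wronsk:
  fixes R T :: "'a::field poly"
  assumes "R \<noteq> 0" "poly T a \<noteq> 0" "order a R \<ge> 1" "(of_nat (order a R) :: 'a) \<noteq> 0"
  shows "order a (pderiv R * T - R * pderiv T) = order a R - 1"
proof -
  define e where "e = order a R"
  obtain U where U: "R = [:-a,1:]^e * U" using order_1[of a R] e_def by (auto elim: dvdE)
  have "order a R = e + order a U" using U assms(1) by (simp add: order_mult order_power_n_n)
  then have "order a U = 0" using e_def by simp
  then have Ua: "poly U a \<noteq> 0" using U assms(1) by (simp add: order_root)
  define e' where "e' = e - 1"
  have e': "e = Suc e'" using assms(3) e_def e'_def by simp
  define X where "X = [:-a,1:]"
  have pX: "pderiv X = 1" by (simp add: X_def pderiv_pCons)
  have "pderiv R = pderiv (X^Suc e' * U)" using U e' X_def by simp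
  also have "\<dots> = X^Suc e' * pderiv U + U * (smult (of_nat (Suc e')) (X^e') * pderiv X)"
    by (simp only: pderiv_mult pderiv_power_Suc)
  also have "\<dots> = smult (of_nat e) (X^e') * U + X^e * pderiv U"
    using e' pX by (simp add: algebra_simps)
  finally have dR: "pderiv R = smult (of_nat e) (X^e') * U + X^e * pderiv U" .
  have RX: "R = X^Suc e' * U" using U e' X_def by simp
  have "pderiv R * T - R * pderiv T
      = (smult (of_nat e) (X^e') * U + X^Suc e' * pderiv U) * T - (X^Suc e' * U) * pderiv T"
    using dR RX e' by simp
  also have "\<dots> = X^e' * (smult (of_nat e) U * T + X * (pderiv U * T - U * pderiv T))"
    by (simp add: algebra_simps)
  finally have "pderiv R * T - R * pderiv T
      = X^e' * (smult (of_nat e) U * T + X * (pderiv U * T - U * pderiv T))" .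
  moreover have "poly (smult (of_nat e) U * T + X * (pderiv U * T - U * pderiv T)) a \<noteq> 0"
    using Ua assms(2,4) e_def X_def by simp
  ultimately have "order a (pderiv R * T - R * pderiv T) = e'"
    using order_lin_pow_mult[of "smult (of_nat e) U * T + X * (pderiv U * T - U * pderiv T)" a e']
    unfolding X_def by simp
  then show ?thesis using e' e_def by simp
qed

lemma two_orders_le:
  fixes X :: "'a::idom poly"
  assumes "X \<noteq> 0" "a \<noteq> c"
  shows "order a X + order c X \<le> degree X"
proof -
  let ?M = "proots X"
  have "order a X + order c X = sum (count ?M) {a, c}" using assms by simp
  also have "\<dots> \<le> sum (count ?M) (set_mset ?M \<union> {a,c})" by (rule sum_mono2) auto
  also have "\<dots> = sum (count ?M) (set_mset ?M)" by (rule sum.mono_neutral_right) (auto simp: not_in_iff)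
  also have "\<dots> = size ?M" by (simp add: size_multiset_overloaded_eq)
  also have "\<dots> \<le> degree X" by (rule size_proots_le)
  finally show ?thesis .
qed

lemma size_proots_alg_closed:
  fixes p :: "'a::alg_closed_field poly"
  assumes "p \<noteq> 0"
  shows "size (proots p) = degree p"
proof -
  obtain A where A: "size A = degree p" "p = smult (lead_coeff p) (\<Prod>x\<in>#A. [:-x, 1:])"
    using alg_closed_imp_factorization[OF assms] by blast
  have nz: "0 \<notin># image_mset (\<lambda>x. [:-x, 1:]) A" by auto
  have "proots (\<Prod>x\<in>#A. [:-x, 1:]) = (\<Sum>x\<in>#A. proots [:-x,1:])"
    using proots_prod_mset[OF nz] by (simp add: multiset.map_comp o_def)
  also have "\<dots> = A" by (induction A) auto
  finally have "proots p = A" using A assms by (metis leading_coeff_0_iff proots_smult)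
  then show ?thesis using A by simp
qed

lemma size_two:
  assumes "set_mset M \<subseteq> {x, y}" "x \<noteq> y"
  shows "size M = count M x + count M y"
proof -
  have "size M = sum (count M) (set_mset M)" by (simp add: size_multiset_overloaded_eq)
  also have "\<dots> = sum (count M) {x, y}" by (rule sum.mono_neutral_left) (use assms in \<open>auto simp: not_in_iff\<close>)
  finally show ?thesis using assms by simp
qed



lemma coeff_rev_deg: "coeff (rev_deg d P) i = (if i \<le> d then coeff P (d - i) else 0)"
  unfolding rev_deg_def by (auto simp: coeff_sum)

lemma rev_deg_diff: "rev_deg d (P - smult b Q) = rev_deg d P - smult b (rev_deg d Q)"
  by (rule poly_eqI) (simp add: coeff_rev_deg)

lemma order_rev_deg:
  fixes P :: "'a::field poly"
  assumes "P \<noteq> 0" "degree P \<le> d"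
  shows "order 0 (rev_deg d P) = d - degree P"
proof -
  have c: "coeff (rev_deg d P) (d - degree P) = lead_coeff P" using assms by (simp add: coeff_rev_deg)
  then have nz: "rev_deg d P \<noteq> 0" using assms by auto
  have "d - degree P \<le> order 0 (rev_deg d P)"
    using nz by (subst monom_1_dvd_iff[symmetric]) (auto simp: monom_1_dvd_iff' coeff_rev_deg coeff_eq_0)
  moreover have "\<not> Suc (d - degree P) \<le> order 0 (rev_deg d P)"
    using nz c assms(1) by (subst monom_1_dvd_iff[symmetric]) (auto simp: monom_1_dvd_iff')
  ultimately show ?thesis by simp
qed

definition Fv :: "'k::field poly \<times> 'k poly \<Rightarrow> 'k option \<Rightarrow> 'k poly" where
  "Fv f v = (case v of None \<Rightarrow> snd f | Some b \<Rightarrow> fst f - smult b (snd f))"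

lemma ram_aff: "ram_index f (Some a) = order a (Fv f (mval f (Some a)))"
  by (simp add: ram_index_def mval_def aff_ram_def Fv_def split: option.split)

lemma root_aff: "poly (Fv f (mval f (Some a))) a = 0"
  by (simp add: mval_def aff_val_def Fv_def)

lemma Fv_nz:
  assumes "is_morphism f" shows "Fv f v \<noteq> 0"
proof (cases v)
  case None then show ?thesis using assms by (simp add: Fv_def is_morphism_def)
next
  case (Some b)
  show ?thesis
  proof
    assume "Fv f v = 0"
    then have P: "fst f = smult b (snd f)" using Some by (simp add: Fv_def)
    have "snd f dvd fst f" unfolding P by (simp add: dvd_smult)
    then have "is_unit (snd f)" using assms unfolding is_morphism_def
      by (meson coprime_common_divisor dvd_refl)
    then have "degree (snd f) = 0" by (simp add: is_unit_iff_degree assms[unfolded is_morphism_def])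
    then have "degree (fst f) = 0" unfolding P by simp
    then show False using assms \<open>degree (snd f) = 0\<close> by (simp add: is_morphism_def)
  qed
qed

lemma Fv_deg: "degree (Fv f v) \<le> mdeg f"
  by (cases v) (auto simp: Fv_def mdeg_def intro!: degree_diff_le)

lemma inf_fin:
  assumes "is_morphism f" "coeff (snd f) (mdeg f) \<noteq> 0"
  shows "degree (snd f) = mdeg f"
    "mval f None = Some (coeff (fst f) (mdeg f) / coeff (snd f) (mdeg f))"
    "ram_index f None = mdeg f - degree (Fv f (mval f None))"
proof -
  show d: "degree (snd f) = mdeg f"
    using assms(2) le_degree[of "snd f" "mdeg f"] by (auto simp: mdeg_def)
  show m: "mval f None = Some (coeff (fst f) (mdeg f) / coeff (snd f) (mdeg f))"
    using assms(2) by (simp add: mval_def aff_val_def at_inf_chart_def poly_0_coeff_0 coeff_rev_deg)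
  define b where "b = coeff (fst f) (mdeg f) / coeff (snd f) (mdeg f)"
  have "ram_index f None = order 0 (rev_deg (mdeg f) (fst f - smult b (snd f)))"
    using assms(2) by (simp add: ram_index_def aff_ram_def at_inf_chart_def aff_val_def poly_0_coeff_0
       coeff_rev_deg rev_deg_diff b_def)
  also have "\<dots> = mdeg f - degree (fst f - smult b (snd f))"
    using Fv_nz[OF assms(1), of "Some b"] Fv_deg[of f "Some b"] by (intro order_rev_deg) (auto simp: Fv_def)
  finally show "ram_index f None = mdeg f - degree (Fv f (mval f None))" using m b_def by (simp add: Fv_def)
qed

lemma inf_inf:
  assumes "is_morphism f" "coeff (snd f) (mdeg f) = 0"
  shows "degree (fst f) = mdeg f" "mval f None = None"
    "ram_index f None = mdeg f - degree (Fv f (mval f None))"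
proof -
  have "degree (snd f) \<noteq> mdeg f" using assms by (metis is_morphism_def leading_coeff_0_iff)
  then show "degree (fst f) = mdeg f" by (auto simp: mdeg_def max_def split: if_splits)
  show m: "mval f None = None"
    using assms(2) by (simp add: mval_def aff_val_def at_inf_chart_def poly_0_coeff_0 coeff_rev_deg)
  have "ram_index f None = order 0 (rev_deg (mdeg f) (snd f))"
    using assms(2) by (simp add: ram_index_def aff_ram_def at_inf_chart_def aff_val_def poly_0_coeff_0
       coeff_rev_deg)
  also have "\<dots> = mdeg f - degree (snd f)"
    using assms(1) by (intro order_rev_deg) (auto simp: is_morphism_def mdeg_def)
  finally show "ram_index f None = mdeg f - degree (Fv f (mval f None))" using m by (simp add: Fv_def)
qed

lemma ram_inf: "is_morphism f \<Longrightarrow> ram_index f None = mdeg f - degree (Fv f (mval f None))"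
  using inf_fin inf_inf by metis



theorem mainTheorem16:
  fixes p N :: nat and l0 l1 linf :: int
    and f :: "'k::alg_closed_field poly \<times> 'k poly"
  assumes "prime p" and "CHAR('k) = p" and "N \<ge> 1"
    and "0 < l0" "l0 < int p ^ N" "0 < l1" "l1 < int p ^ N" "0 < linf" "linf < int p ^ N"
    and "odd (l0 + l1 + linf)" "l0 + l1 + linf < 2 * int p ^ N"
    and "is_morphism f" "separable_morphism f" "tamely_ramified f"
    and "int (ram_index f (Some 0)) = l0" "int (ram_index f (Some 1)) = l1"
    and "int (ram_index f None) = linf"
    and "\<forall>x. x \<notin> {Some 0, Some 1, None} \<longrightarrow> ram_index f x = 1"
  shows "mval f (Some 0) \<noteq> mval f (Some 1) \<and> mval f (Some 0) \<noteq> mval f None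
         \<and> mval f (Some 1) \<noteq> mval f None"
proof -
  define P where "P = fst f"
  define Q where "Q = snd f"
  define d where "d = mdeg f"
  define W where "W = pderiv P * Q - P * pderiv Q"
  define e0 e1 einf where "e0 = ram_index f (Some 0)" and "e1 = ram_index f (Some 1)"
    and "einf = ram_index f None"
  have mor: "is_morphism f" by fact
  have cop: "coprime P Q" and Qnz: "Q \<noteq> 0" using mor by (auto simp: is_morphism_def P_def Q_def)
  have Wnz: "W \<noteq> 0" using assms(13) by (simp add: separable_morphism_def W_def P_def Q_def)
  have tame: "(of_nat (ram_index f x) :: 'k) \<noteq> 0" for x
    using assms(14) assms(2) by (simp add: tamely_ramified_def of_nat_eq_0_iff_char_dvd)
  have ordW: "order a W = ram_index f (Some a) - 1" for a
  proof (cases "poly Q a = 0")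
    case False
    define b where "b = poly P a / poly Q a"
    have mv: "mval f (Some a) = Some b" using False by (simp add: mval_def aff_val_def b_def P_def Q_def)
    define R where "R = P - smult b Q"
    have FR: "Fv f (mval f (Some a)) = R" using mv by (simp add: Fv_def R_def P_def Q_def)
    have Rnz: "R \<noteq> 0" using Fv_nz[OF mor] FR by metis
    have ram: "ram_index f (Some a) = order a R" using ram_aff[of f a] FR by simp
    have "poly R a = 0" using root_aff[of f a] FR by simp
    then have o1: "order a R \<ge> 1" using Rnz order_root by (metis less_one not_le)
    have "W = pderiv R * Q - R * pderiv Q"
      by (simp add: W_def R_def pderiv_diff pderiv_smult algebra_simps)
    then show ?thesis using order_wronsk[OF Rnz False o1] tame[of "Some a"] ram by simp
  next
    case True
    have mv: "mval f (Some a) = None" using True by (simp add: mval_def aff_val_def Q_def)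
    have ram: "ram_index f (Some a) = order a Q" using ram_aff[of f a] mv by (simp add: Fv_def Q_def)
    have Pa: "poly P a \<noteq> 0"
    proof
      assume "poly P a = 0"
      then have "[:-a,1:] dvd P" "[:-a,1:] dvd Q" using True by (auto simp: poly_eq_0_iff_dvd)
      then have "is_unit [:-a,1:]" using cop by (meson coprime_common_divisor)
      then show False by (simp add: is_unit_iff_degree)
    qed
    have o1: "order a Q \<ge> 1" using True Qnz order_root by (metis less_one not_le)
    have "W = - (pderiv Q * P - Q * pderiv P)" by (simp add: W_def algebra_simps)
    then have "order a W = order a (pderiv Q * P - Q * pderiv P)" by (simp only: order_uminus)
    then show ?thesis using order_wronsk[OF Qnz Pa o1] tame[of "Some a"] ram by simp
  qed
  have e0pos: "e0 \<ge> 1" and e1pos: "e1 \<ge> 1" and einfpos: "einf \<ge> 1"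
    using assms(4,6,8,15,16,17) e0_def e1_def einf_def by auto
  have setW: "set_mset (proots W) \<subseteq> {0, 1}"
  proof
    fix x assume "x \<in># proots W"
    then have "order x W > 0" using Wnz by (simp add: order_gt_0_iff)
    then have "ram_index f (Some x) \<noteq> 1" using ordW[of x] by simp
    then show "x \<in> {0, 1}" using assms(18) by auto
  qed
  have degW1: "degree W = (e0 - 1) + (e1 - 1)"
    using size_proots_alg_closed[OF Wnz] size_two[OF setW] Wnz ordW e0_def e1_def by simp
  have einf_le: "einf \<le> d" using ram_inf[OF mor] einf_def d_def by simp
  have degW2: "degree W = 2 * d - einf - 1"
  proof (cases "coeff Q d = 0")
    case False
    note I = inf_fin[OF mor False[unfolded Q_def d_def]]
    define b where "b = coeff P d / coeff Q d"
    define R where "R = P - smult b Q"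
    have FR: "Fv f (mval f None) = R" using I(2) by (simp add: Fv_def R_def P_def Q_def b_def d_def)
    have Rnz: "R \<noteq> 0" using Fv_nz[OF mor] FR by metis
    have dQ: "degree Q = d" using I(1) Q_def d_def by simp
    have ei: "einf = d - degree R" using I(3) FR einf_def d_def by simp
    have dd: "d = degree R + einf" using ei einfpos by simp
    have "(of_nat (degree R) :: 'k) \<noteq> of_nat (degree Q)"
      using tame[of None] dd dQ einf_def by simp
    then have "degree (pderiv R * Q - R * pderiv Q) = degree R + degree Q - 1"
      by (rule degree_wronsk[OF Rnz Qnz])
    moreover have "W = pderiv R * Q - R * pderiv Q"
      by (simp add: W_def R_def pderiv_diff pderiv_smult algebra_simps)
    ultimately show ?thesis using dd dQ by simp
  next
    case True
    note I = inf_inf[OF mor True[unfolded Q_def d_def]]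
    have dP: "degree P = d" using I(1) P_def d_def by simp
    have ei: "einf = d - degree Q" using I(3) I(2) einf_def d_def by (simp add: Fv_def Q_def)
    have dd: "d = degree Q + einf" using ei einfpos by simp
    have Pnz: "P \<noteq> 0" using dP mor by (auto simp: d_def is_morphism_def mdeg_def)
    have "(of_nat (degree P) :: 'k) \<noteq> of_nat (degree Q)"
      using tame[of None] dd dP einf_def by simp
    then have "degree W = degree P + degree Q - 1"
      unfolding W_def by (rule degree_wronsk[OF Pnz Qnz])
    then show ?thesis using dd dP by simp
  qed
  have sum: "e0 + e1 + einf = 2 * d + 1"
    using degW1 degW2 e0pos e1pos einfpos einf_le by linarith
  have ord_le: "ram_index f (Some a) \<le> d" for a
    using ram_aff[of f a] order_degree[OF Fv_nz[OF mor]] Fv_deg[of f] d_def by (metis le_trans)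
  have A: "mval f (Some 0) \<noteq> mval f (Some 1)"
  proof
    assume eq: "mval f (Some 0) = mval f (Some 1)"
    define X where "X = Fv f (mval f (Some 0))"
    have "e0 + e1 \<le> degree X"
      using two_orders_le[OF Fv_nz[OF mor, of "mval f (Some 0)"], of 0 1] ram_aff[of f 0] ram_aff[of f 1]
        eq e0_def e1_def X_def by simp
    moreover have "degree X \<le> d" using Fv_deg X_def d_def by simp
    ultimately show False using sum einf_le by linarith
  qed
  have B: "mval f (Some a) \<noteq> mval f None" if "a = 0 \<or> a = 1" for a :: 'k
  proof
    assume eq: "mval f (Some a) = mval f None"
    define X where "X = Fv f (mval f None)"
    have "ram_index f (Some a) \<le> degree X"
      using ram_aff[of f a] order_degree[OF Fv_nz[OF mor]] eq X_def by metis
    moreover have "einf = d - degree X" using ram_inf[OF mor] X_def einf_def d_def by simp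
    moreover have "degree X \<le> d" using Fv_deg X_def d_def by simp
    moreover have "e0 \<le> d" "e1 \<le> d" using ord_le e0_def e1_def by auto
    ultimately show False using sum that e0_def e1_def by auto
  qed
  show ?thesis using A B by auto
qed

end
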